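(* Let $\{\alpha_k\}_{k=0}^n$ be arbitrary nonzero real numbers with $n\ge1$. Then there exist $b>0$, $\zeta\in\mathbb{R}$, and a $\sigma\in\Sigma_{1,b}$ such that $(\zeta,\{(\alpha_k,1,k)\}_{k=0}^n)$ is an affine symmetry of $\sigma$.
   Context: For $a,b>0$, $\Sigma_{a,b}$ is the class of meromorphic functions on $\mathbb{C}$ of the form $\sigma(z)=C+\sum_{k\in\mathbb{Z}}c_k[\mathrm{sgn}(k)+\tanh(\pi b^{-1}(z-ka))]$ with $C\in\mathbb{C}$, $\{c_k\}\subset\mathbb{C}$, $\sup_k|c_k|e^{-\pi a'|k|/b}<\infty$ for some $a'\in(0,a)$, at least one $c_k\ne0$, and $\mathrm{sgn}(0)=0$. An affine symmetry of $\sigma$ (viewed as a function on $\mathbb{R}$) is $(\zeta,\{(\alpha_s,\beta_s,\gamma_s)\}_{s\in\mathcal{I}})$ with $\mathcal{I}$ nonempty finite, real entries, such that $\sum_s\alpha_s\sigma(\beta_st+\gamma_s)=\zeta$ for all $t\in\mathbb{R}$, and there is no proper subset $\mathcal{I}'\subsetneq\mathcal{I}$ for which $\{\sigma(\beta_s\cdot+\gamma_s):s\in\mathcal{I}'\}\cup\{\mathbf1\}$ is linearly dependent as functions $\mathbb{R}\to\mathbb{C}$. *)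

theory Defs
  imports "HOL-Analysis.Analysis"
begin

text \<open>The sum over Z is an (absolutely convergent) infinite sum.\<close>
definition Sigma_class :: "real \<Rightarrow> real \<Rightarrow> (complex \<Rightarrow> complex) \<Rightarrow> bool" where
  "Sigma_class a b \<sigma> \<longleftrightarrow>
     (\<exists>(C::complex) (c::int \<Rightarrow> complex).
        (\<exists>a'. 0 < a' \<and> a' < a \<and>
              (\<exists>M. \<forall>k. norm (c k) * exp (- pi * a' * \<bar>real_of_int k\<bar> / b) \<le> M)) \<and>
        (\<exists>k. c k \<noteq> 0) \<and>
        (\<forall>z. \<sigma> z = C + (\<Sum>\<^sub>\<infinity>k\<in>(UNIV::int set).
                 c k * (of_int (sgn k) + tanh (of_real (pi / b) * (z - of_int k * of_real a))))))"

definition lin_dep_with_one ::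
  "(complex \<Rightarrow> complex) \<Rightarrow> 'i set \<Rightarrow> ('i \<Rightarrow> real) \<Rightarrow> ('i \<Rightarrow> real) \<Rightarrow> bool" where
  "lin_dep_with_one \<sigma> J \<beta> \<gamma> \<longleftrightarrow>
     (\<exists>(e::complex) (d::'i \<Rightarrow> complex). (e \<noteq> 0 \<or> (\<exists>s\<in>J. d s \<noteq> 0)) \<and>
        (\<forall>t::real. e + (\<Sum>s\<in>J. d s * \<sigma> (of_real (\<beta> s * t + \<gamma> s))) = 0))"

definition affine_symmetry ::
  "(complex \<Rightarrow> complex) \<Rightarrow> real \<Rightarrow> 'i set \<Rightarrow> ('i \<Rightarrow> real) \<Rightarrow> ('i \<Rightarrow> real) \<Rightarrow> ('i \<Rightarrow> real) \<Rightarrow> bool" where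
  "affine_symmetry \<sigma> \<zeta> I \<alpha> \<beta> \<gamma> \<longleftrightarrow>
     finite I \<and> I \<noteq> {} \<and>
     (\<forall>t::real. (\<Sum>s\<in>I. of_real (\<alpha> s) * \<sigma> (of_real (\<beta> s * t + \<gamma> s))) = of_real \<zeta>) \<and>
     \<not> (\<exists>J. J \<subset> I \<and> lin_dep_with_one \<sigma> J \<beta> \<gamma>)"

end

theory Submission
  imports Defs
begin


function fwd :: "(nat \<Rightarrow> real) \<Rightarrow> nat \<Rightarrow> nat \<Rightarrow> real" where
 "fwd a n i = (if i < n then (if Suc i = n then 1 else 0)
     else - (\<Sum>j<n. a j * fwd a n (i - n + j)) / a n)"
  by auto
termination by (relation "Wellfounded.measure (\<lambda>(a,n,i). i)") auto

function bwd :: "(nat \<Rightarrow> real) \<Rightarrow> nat \<Rightarrow> nat \<Rightarrow> real" where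
 "bwd a n i = (if i < n then (if i = 0 then 1 else 0)
     else - (\<Sum>j\<in>{1..n}. a j * bwd a n (i - j)) / a 0)"
  by auto
termination by (relation "Wellfounded.measure (\<lambda>(a,n,i). i)") auto

declare fwd.simps[simp del] bwd.simps[simp del]

lemma fwd_bound:
  assumes "n \<ge> 1" "a n \<noteq> 0" "K \<ge> 1" "(\<Sum>j<n. \<bar>a j\<bar>) / \<bar>a n\<bar> \<le> K"
  shows "\<bar>fwd a n i\<bar> \<le> K ^ i"
proof (induction i rule: less_induct)
  case (less i)
  show ?case
  proof (cases "i < n")
    case True then show ?thesis using assms by (simp add: fwd.simps)
  next
    case False
    have "\<bar>fwd a n i\<bar> = \<bar>\<Sum>j<n. a j * fwd a n (i - n + j)\<bar> / \<bar>a n\<bar>"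
      using False by (simp add: fwd.simps[of a n i] abs_minus_cancel)
    also have "\<dots> \<le> (\<Sum>j<n. \<bar>a j\<bar> * K ^ (i - 1)) / \<bar>a n\<bar>"
    proof (intro divide_right_mono order.trans[OF sum_abs] sum_mono)
      fix j assume j: "j \<in> {..<n}"
      have "\<bar>fwd a n (i - n + j)\<bar> \<le> K ^ (i - n + j)" using less j False by auto
      also have "\<dots> \<le> K ^ (i - 1)" using j False assms by (intro power_increasing) auto
      finally show "\<bar>a j * fwd a n (i - n + j)\<bar> \<le> \<bar>a j\<bar> * K ^ (i - 1)"
        by (simp add: abs_mult mult_left_mono)
    qed simp
    also have "\<dots> = ((\<Sum>j<n. \<bar>a j\<bar>) / \<bar>a n\<bar>) * K ^ (i - 1)"
      by (simp add: sum_distrib_right)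
    also have "\<dots> \<le> K * K ^ (i - 1)" using assms by (intro mult_right_mono) auto
    also have "\<dots> = K ^ i" using False assms by (cases i) auto
    finally show ?thesis .
  qed
qed

lemma bwd_bound:
  assumes "n \<ge> 1" "a 0 \<noteq> 0" "K \<ge> 1" "(\<Sum>j\<in>{1..n}. \<bar>a j\<bar>) / \<bar>a 0\<bar> \<le> K"
  shows "\<bar>bwd a n i\<bar> \<le> K ^ i"
proof (induction i rule: less_induct)
  case (less i)
  show ?case
  proof (cases "i < n")
    case True then show ?thesis using assms by (simp add: bwd.simps)
  next
    case False
    have "\<bar>bwd a n i\<bar> = \<bar>\<Sum>j\<in>{1..n}. a j * bwd a n (i - j)\<bar> / \<bar>a 0\<bar>"
      using False by (simp add: bwd.simps[of a n i] abs_minus_cancel)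
    also have "\<dots> \<le> (\<Sum>j\<in>{1..n}. \<bar>a j\<bar> * K ^ (i - 1)) / \<bar>a 0\<bar>"
    proof (intro divide_right_mono order.trans[OF sum_abs] sum_mono)
      fix j assume j: "j \<in> {1..n}"
      have "\<bar>bwd a n (i - j)\<bar> \<le> K ^ (i - j)" using less j False by auto
      also have "\<dots> \<le> K ^ (i - 1)" using j False assms by (intro power_increasing) auto
      finally show "\<bar>a j * bwd a n (i - j)\<bar> \<le> \<bar>a j\<bar> * K ^ (i - 1)"
        by (simp add: abs_mult mult_left_mono)
    qed simp
    also have "\<dots> = ((\<Sum>j\<in>{1..n}. \<bar>a j\<bar>) / \<bar>a 0\<bar>) * K ^ (i - 1)"
      by (simp add: sum_distrib_right)
    also have "\<dots> \<le> K * K ^ (i - 1)" using assms by (intro mult_right_mono) auto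
    also have "\<dots> = K ^ i" using False assms by (cases i) auto
    finally show ?thesis .
  qed
qed

lemma seq_exists:
  fixes a :: "nat \<Rightarrow> real"
  assumes n: "n \<ge> 1" and nz: "\<forall>k\<le>n. a k \<noteq> 0"
  shows "\<exists>c::int\<Rightarrow>real. \<exists>K B. K \<ge> 1 \<and> B \<ge> 0 \<and> (\<forall>m. \<bar>c m\<bar> \<le> B * K ^ nat \<bar>m\<bar>) \<and>
     (\<forall>m. (\<Sum>j\<le>n. a j * c (m + int j)) = 0) \<and>
     (\<forall>k<n. c (int k) = (if Suc k = n then 1 else 0))"
proof -
  define c where "c m = (if m \<ge> 0 then fwd a n (nat m) else bwd a n (nat (int n - 1 - m)))" for m
  define K where "K = 1 + (\<Sum>j<n. \<bar>a j\<bar>) / \<bar>a n\<bar> + (\<Sum>j\<in>{1..n}. \<bar>a j\<bar>) / \<bar>a 0\<bar>"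
  have an: "a n \<noteq> 0" and a0: "a 0 \<noteq> 0" using nz by auto
  have K1: "K \<ge> 1" unfolding K_def
    by (smt (verit) divide_nonneg_nonneg sum_nonneg abs_ge_zero)
  have Kf: "(\<Sum>j<n. \<bar>a j\<bar>) / \<bar>a n\<bar> \<le> K" unfolding K_def
    by (smt (verit) divide_nonneg_nonneg sum_nonneg abs_ge_zero)
  have Kb: "(\<Sum>j\<in>{1..n}. \<bar>a j\<bar>) / \<bar>a 0\<bar> \<le> K" unfolding K_def
    by (smt (verit) divide_nonneg_nonneg sum_nonneg abs_ge_zero)
  have low: "c k = bwd a n (nat (int n - 1 - k))" if "k \<le> int n - 1" for k
  proof (cases "k \<ge> 0")
    case True
    then show ?thesis using that unfolding c_def
      by (auto simp: fwd.simps[of a n "nat k"] bwd.simps[of a n "nat (int n - 1 - k)"])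
  qed (simp add: c_def)
  have bound: "\<bar>c m\<bar> \<le> K ^ n * K ^ nat \<bar>m\<bar>" for m
  proof (cases "m \<ge> 0")
    case True
    have "\<bar>c m\<bar> \<le> K ^ nat m" using fwd_bound[OF n an K1 Kf] True by (simp add: c_def)
    also have "\<dots> \<le> K ^ n * K ^ nat \<bar>m\<bar>" using K1 True by (simp add: power_add[symmetric] power_increasing)
    finally show ?thesis .
  next
    case False
    have "\<bar>c m\<bar> \<le> K ^ nat (int n - 1 - m)" using bwd_bound[OF n a0 K1 Kb] False by (simp add: c_def)
    also have "\<dots> \<le> K ^ n * K ^ nat \<bar>m\<bar>" using K1 False
      by (simp add: power_add[symmetric] power_increasing)
    finally show ?thesis .
  qed
  have rec: "(\<Sum>j\<le>n. a j * c (m + int j)) = 0" for m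
  proof (cases "m \<ge> 0")
    case True
    have e: "fwd a n (nat m + n) = - (\<Sum>j<n. a j * fwd a n (nat m + j)) / a n"
      by (simp add: fwd.simps[of a n "nat m + n"])
    have "(\<Sum>j\<le>n. a j * c (m + int j)) = (\<Sum>j<n. a j * fwd a n (nat m + j)) + a n * fwd a n (nat m + n)"
      using True by (simp add: c_def lessThan_Suc_atMost[symmetric] nat_add_distrib)
    also have "\<dots> = 0" using an by (simp add: e)
    finally show ?thesis .
  next
    case False
    define i where "i = nat (int n - 1 - m)"
    have i: "i \<ge> n" using False unfolding i_def by auto
    have e: "bwd a n i = - (\<Sum>j\<in>{1..n}. a j * bwd a n (i - j)) / a 0"
      using i by (simp add: bwd.simps[of a n i])
    have "(\<Sum>j\<le>n. a j * c (m + int j)) = (\<Sum>j\<in>{0..n}. a j * bwd a n (i - j))"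
      proof (intro sum.cong refl)
      fix j assume j: "j \<in> {0..n}"
      have "nat (int n - 1 - (m + int j)) = i - j" using j False unfolding i_def by auto
      then show "a j * c (m + int j) = a j * bwd a n (i - j)"
        using j False by (subst low) auto
    qed (auto)
    also have "\<dots> = a 0 * bwd a n i + (\<Sum>j\<in>{1..n}. a j * bwd a n (i - j))"
      by (subst sum.atLeast_Suc_atMost) auto
    also have "\<dots> = 0" using a0 by (simp add: e)
    finally show ?thesis .
  qed
  have win: "c (int k) = (if Suc k = n then 1 else 0)" if "k < n" for k
    using that by (simp add: c_def fwd.simps[of a n k])
  show ?thesis
    using K1 bound rec win by (intro exI[of _ c] exI[of _ K] exI[of _ "K^n"]) auto
qed


lemma tanh_of_real_c: "tanh (complex_of_real x) = complex_of_real (tanh x)"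
  by (simp add: tanh_altdef exp_of_real flip: of_real_minus exp_of_real)

lemma tanh_1m: "1 - tanh (y::real) \<le> 2 * exp (-2*y)"
proof -
  define e where "e = exp (-2*y)"
  have e: "e > 0" by (simp add: e_def)
  have "1 - tanh y = 1 - (1 - e) / (1 + e)"
    unfolding tanh_real_altdef e_def by simp
  also have "\<dots> = 2 * e / (1 + e)" using e by (simp add: field_simps)
  also have "\<dots> \<le> 2 * e" using e by (simp add: divide_le_eq)
  finally show ?thesis by (simp add: e_def)
qed

lemma tanh_1p: "1 + tanh (y::real) \<le> 2 * exp (2*y)"
proof -
  have "1 - tanh (-y) \<le> 2 * exp (-2*(-y))" by (rule tanh_1m)
  then show ?thesis by simp
qed

lemma has_sum_sum_fin:
  fixes f :: "'i \<Rightarrow> 'a \<Rightarrow> 'b::topological_comm_monoid_add"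
  assumes "finite J" "\<And>j. j \<in> J \<Longrightarrow> (f j has_sum s j) A"
  shows "((\<lambda>x. \<Sum>j\<in>J. f j x) has_sum (\<Sum>j\<in>J. s j)) A"
  using assms
proof (induction J rule: finite_induct)
  case empty then show ?case by simp
next
  case (insert j J)
  have "((\<lambda>x. f j x + (\<Sum>j\<in>J. f j x)) has_sum (s j + (\<Sum>j\<in>J. s j))) A"
  proof (rule has_sum_add)
    show "(f j has_sum s j) A" using insert.prems by auto
    show "((\<lambda>x. \<Sum>j\<in>J. f j x) has_sum (\<Sum>j\<in>J. s j)) A"
      using insert.IH insert.prems by auto
  qed
  then show ?case using insert by simp
qed

lemma has_sum_diff':
  fixes f g :: "'a \<Rightarrow> 'b::{topological_ab_group_add}"
  assumes "(f has_sum a) A" "(g has_sum b) A"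
  shows "((\<lambda>x. f x - g x) has_sum (a - b)) A"
proof -
  have "((\<lambda>x. - g x) has_sum (- b)) A" using has_sum_uminus[where f=g and a="-b" and A=A] assms(2) by simp
  from has_sum_add[OF assms(1) this] show ?thesis by simp
qed

lemma geom_int:
  fixes r :: real assumes r: "0 \<le> r" "r < 1"
  shows "((\<lambda>k::int. r ^ nat \<bar>k\<bar>) has_sum ((1 + r) / (1 - r))) UNIV"
proof -
  let ?g = "\<lambda>k::int. r ^ nat \<bar>k\<bar>"
  have A: "((\<lambda>n::nat. r ^ n) has_sum (1 / (1 - r))) UNIV"
    using r by (intro sums_nonneg_imp_has_sum geometric_sums) auto
  have A2: "((\<lambda>n::nat. r * r ^ n) has_sum (r * (1 / (1 - r)))) UNIV"
    by (rule has_sum_cmult_right[OF A])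
  have P: "(?g has_sum (1 / (1 - r))) (range int)"
    by (subst has_sum_reindex) (use A in \<open>auto simp: o_def inj_on_def\<close>)
  define h where "h n = - int n - 1" for n
  have P2: "(?g has_sum (r * (1 / (1 - r)))) (range h)"
  proof (subst has_sum_reindex)
    show "inj_on h UNIV" by (auto simp: inj_on_def h_def)
    have "(?g \<circ> h) = (\<lambda>n. r * r ^ n)"
      by (auto simp: h_def o_def nat_add_distrib)
    then show "((?g \<circ> h) has_sum (r * (1 / (1 - r)))) UNIV" using A2 by simp
  qed
  have U: "range int \<union> range h = UNIV"
  proof -
    have "k \<in> range int \<union> range h" for k
    proof (cases "k \<ge> 0")
      case True then have "k = int (nat k)" by simp
      then show ?thesis by blast
    next
      case False then have "k = h (nat (-k-1))" by (simp add: h_def)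
      then show ?thesis by blast
    qed
    then show ?thesis by blast
  qed
  have D: "range int \<inter> range h = {}" by (auto simp: h_def)
  have "(?g has_sum (1 / (1 - r) + r * (1 / (1 - r)))) (range int \<union> range h)"
    by (rule has_sum_Un_disjoint[OF P P2 D])
  moreover have "1 / (1 - r) + r * (1 / (1 - r)) = (1 + r) / (1 - r)"
    using r by (simp add: field_simps)
  ultimately show ?thesis using U by simp
qed

lemma geom_int_shift:
  fixes r :: real assumes r: "0 \<le> r" "r < 1"
  shows "((\<lambda>k::int. r ^ nat \<bar>k - m\<bar>) has_sum (2 * r / (1 - r))) (UNIV - {m})"
proof -
  have "((\<lambda>k::int. r ^ nat \<bar>k - m\<bar>) has_sum ((1 + r) / (1 - r))) UNIV"
  proof -
    have bij: "bij_betw (\<lambda>k::int. k - m) UNIV UNIV"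
      by (rule bij_betwI[where g="\<lambda>k. k + m"]) auto
    show ?thesis using has_sum_reindex_bij_betw[OF bij, of "\<lambda>k::int. r ^ nat \<bar>k\<bar>"] geom_int[OF r]
      by simp
  qed
  from has_sum_Diff[OF this, of "{m}" 1] have
    "((\<lambda>k::int. r ^ nat \<bar>k - m\<bar>) has_sum ((1 + r) / (1 - r) - 1)) (UNIV - {m})"
    by (simp add: has_sum_finite_iff)
  moreover have "(1 + r) / (1 - r) - 1 = 2 * r / (1 - r)" using r by (simp add: field_simps)
  ultimately show ?thesis by simp
qed

lemma summable_geom_bound:
  fixes f :: "int \<Rightarrow> 'a::banach" and r :: real
  assumes r: "0 \<le> r" "r < 1" and b: "\<And>k. norm (f k) \<le> C * r ^ nat \<bar>k\<bar>"
  shows "f summable_on UNIV"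
proof (rule abs_summable_summable)
  have "(\<lambda>k::int. C * r ^ nat \<bar>k\<bar>) summable_on UNIV"
    using has_sum_cmult_right[OF geom_int[OF r]] summable_on_def by blast
  then show "(\<lambda>x. norm (f x)) summable_on UNIV"
    by (rule summable_on_comparison_test) (use b in auto)
qed



lemma exp_nat_abs: "exp (lam * real (nat \<bar>k\<bar>)) = exp lam ^ nat \<bar>k\<bar>"
  by (simp add: exp_of_nat_mult[symmetric] mult.commute)

lemma sgn_tanh_bound:
  fixes lam x :: real and k :: int
  assumes lam: "lam > 0"
  shows "\<bar>of_int (sgn k) + tanh (lam * (x - of_int k))\<bar> \<le> 2 * exp (2*lam*\<bar>x\<bar>) / exp lam ^ (2 * nat \<bar>k\<bar>)"
proof -
  have pw: "exp lam ^ (2 * nat \<bar>k\<bar>) = exp (2 * lam * \<bar>of_int k\<bar>)"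
    using exp_nat_abs[of "2*lam" k] by (simp add: power_mult exp_of_nat_mult[symmetric] mult_ac)
  have R: "2 * exp (2*lam*\<bar>x\<bar>) / exp lam ^ (2 * nat \<bar>k\<bar>) = 2 * exp (2*lam*\<bar>x\<bar> - 2 * lam * \<bar>of_int k\<bar>)"
    by (simp add: pw exp_diff)
  show ?thesis
  proof (cases "k > 0")
    case True
    have "\<bar>of_int (sgn k) + tanh (lam * (x - of_int k))\<bar> = 1 + tanh (lam * (x - of_int k))"
      using True tanh_real_gt_neg1[of "lam * (x - of_int k)"] by simp
    also have "\<dots> \<le> 2 * exp (2 * (lam * (x - of_int k)))" by (rule tanh_1p)
    also have "\<dots> \<le> 2 * exp (2*lam*\<bar>x\<bar> - 2 * lam * \<bar>of_int k\<bar>)"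
      using True lam by (auto simp: algebra_simps mult_left_mono)
    finally show ?thesis using R by simp
  next
    case False
    show ?thesis
    proof (cases "k = 0")
      case True
      have "\<bar>tanh (lam * x)\<bar> \<le> 1" using tanh_real_bounds[of "lam*x"] by auto
      also have "1 \<le> 2 * exp (2*lam*\<bar>x\<bar>)"
      proof -
        have "1 \<le> exp (2*lam*\<bar>x\<bar>)" using lam by simp
        then show ?thesis by linarith
      qed
      finally show ?thesis using True by simp
    next
      case False
      then have k: "k < 0" using \<open>\<not> k > 0\<close> by simp
      have "\<bar>of_int (sgn k) + tanh (lam * (x - of_int k))\<bar> = 1 - tanh (lam * (x - of_int k))"
        using k tanh_real_lt_1[of "lam * (x - of_int k)"] by simp
      also have "\<dots> \<le> 2 * exp (-2 * (lam * (x - of_int k)))" by (rule tanh_1m)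
      also have "\<dots> \<le> 2 * exp (2*lam*\<bar>x\<bar> - 2 * lam * \<bar>of_int k\<bar>)"
      proof -
        have "0 \<le> lam * (2 * (x + \<bar>x\<bar>))" using lam by (intro mult_nonneg_nonneg) auto
        then show ?thesis using k lam by (auto simp: algebra_simps mult_left_mono)
      qed
      finally show ?thesis using R by simp
    qed
  qed
qed

lemma T_summable:
  fixes c :: "int \<Rightarrow> real"
  assumes lam: "lam > 0" and K: "K \<ge> 1" and B: "B \<ge> 0"
    and cb: "\<And>m. \<bar>c m\<bar> \<le> B * K ^ nat \<bar>m\<bar>" and KE: "K < exp lam ^ 2"
  shows "(\<lambda>k. c k * (of_int (sgn k) + tanh (lam * (x - of_int k)))) summable_on UNIV"
proof (rule summable_geom_bound)
  define E where "E = exp lam"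
  have E: "E > 0" by (simp add: E_def)
  show "0 \<le> K / exp lam ^ 2" using K by simp
  show "K / exp lam ^ 2 < 1" using KE by simp
  fix k :: int
  have "norm (c k * (of_int (sgn k) + tanh (lam * (x - of_int k))))
        = \<bar>c k\<bar> * \<bar>of_int (sgn k) + tanh (lam * (x - of_int k))\<bar>" by (simp add: abs_mult)
  also have "\<dots> \<le> (B * K ^ nat \<bar>k\<bar>) * (2 * exp (2*lam*\<bar>x\<bar>) / exp lam ^ (2 * nat \<bar>k\<bar>))"
    by (intro mult_mono cb sgn_tanh_bound lam) (use B K in auto)
  also have "\<dots> = (B * 2 * exp (2*lam*\<bar>x\<bar>)) * (K / exp lam ^ 2) ^ nat \<bar>k\<bar>"
    by (simp add: power_divide power_mult[symmetric] mult.commute)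
  finally show "norm (c k * (of_int (sgn k) + tanh (lam * (x - of_int k))))
      \<le> (B * 2 * exp (2*lam*\<bar>x\<bar>)) * (K / exp lam ^ 2) ^ nat \<bar>k\<bar>" .
qed



lemma decomp:
  fixes c :: "int \<Rightarrow> real" and d :: "nat \<Rightarrow> complex" and lam t :: real
  assumes summ: "\<And>x. (\<lambda>k. c k * (of_int (sgn k) + tanh (lam * (x - of_int k)))) summable_on UNIV"
    and J: "finite J" "J \<subseteq> {..n}"
  shows "((\<lambda>m. (\<Sum>j\<in>J. d j * of_real (c (m + int j))) * of_real (of_int (sgn m) + tanh (lam * (t - of_int m)))) has_sum
     ((\<Sum>j\<in>J. d j * of_real (infsum (\<lambda>k. c k * (of_int (sgn k) + tanh (lam * ((t + real j) - of_int k)))) UNIV))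
      - (\<Sum>m\<in>{-int n..0}. \<Sum>j\<in>J. d j * of_real (c (m + int j)) * of_real (of_int (sgn (m + int j) - sgn m))))) UNIV"
proof -
  define S where "S j = infsum (\<lambda>k. c k * (of_int (sgn k) + tanh (lam * ((t + real j) - of_int k)))) UNIV" for j
  have h1: "((\<lambda>k. complex_of_real (c k * (of_int (sgn k) + tanh (lam * ((t + real j) - of_int k))))) has_sum of_real (S j)) UNIV" for j
    unfolding S_def by (intro has_sum_of_real) (use summ[of "t + real j"] in \<open>simp add: summable_iff_has_sum_infsum\<close>)
  have h2: "((\<lambda>m. complex_of_real (c (m + int j) * (of_int (sgn (m + int j)) + tanh (lam * (t - of_int m))))) has_sum of_real (S j)) UNIV" for j
  proof -
    have bij: "bij_betw (\<lambda>m::int. m + int j) UNIV UNIV" by (rule bij_betwI[where g="\<lambda>k. k - int j"]) auto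
    have e: "(t + real j) - of_int (m + int j) = t - of_int m" for m by simp
    show ?thesis
      using has_sum_reindex_bij_betw[OF bij, of "\<lambda>k. complex_of_real (c k * (of_int (sgn k) + tanh (lam * ((t + real j) - of_int k))))"] h1[of j]
      by (simp only: e)
  qed
  have h3: "((\<lambda>m. \<Sum>j\<in>J. d j * complex_of_real (c (m + int j) * (of_int (sgn (m + int j)) + tanh (lam * (t - of_int m))))) has_sum (\<Sum>j\<in>J. d j * of_real (S j))) UNIV"
    by (rule has_sum_sum_fin[OF J(1)]) (rule has_sum_cmult_right[OF h2])
  define u where "u m = (\<Sum>j\<in>J. d j * of_real (c (m + int j)) * of_real (of_int (sgn (m + int j) - sgn m)))" for m
  have h4: "(u has_sum (\<Sum>m\<in>{-int n..0}. u m)) UNIV"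
  proof (rule has_sum_finite_neutralI)
    fix m assume m: "m \<in> UNIV - {-int n..0}"
    have "sgn (m + int j) - sgn m = 0" if "j \<in> J" for j
    proof -
      have "j \<le> n" using that J by auto
      then show ?thesis using m by (auto simp: sgn_if)
    qed
    then show "u m = 0" by (simp add: u_def)
  qed auto

  have eq: "(\<lambda>m. (\<Sum>j\<in>J. d j * complex_of_real (c (m + int j) * (of_int (sgn (m + int j)) + tanh (lam * (t - of_int m))))) - u m)
      = (\<lambda>m. (\<Sum>j\<in>J. d j * of_real (c (m + int j))) * of_real (of_int (sgn m) + tanh (lam * (t - of_int m))))"
  proof (rule ext)
    fix m :: int
    show "(\<Sum>j\<in>J. d j * complex_of_real (c (m + int j) * (of_int (sgn (m + int j)) + tanh (lam * (t - of_int m))))) - u m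
      = (\<Sum>j\<in>J. d j * of_real (c (m + int j))) * of_real (of_int (sgn m) + tanh (lam * (t - of_int m)))"
      unfolding u_def sum_subtractf[symmetric] sum_distrib_right
      by (intro sum.cong refl) (simp add: algebra_simps)
  qed
  show ?thesis using has_sum_diff'[OF h3 h4] unfolding eq by (simp add: S_def u_def)
qed

lemma annih:
  fixes c :: "int \<Rightarrow> real" and \<alpha> :: "nat \<Rightarrow> real" and d :: "nat \<Rightarrow> complex"
  assumes n: "n \<ge> 1" and nz: "\<forall>k\<le>n. \<alpha> k \<noteq> 0"
   and rec: "\<forall>m. (\<Sum>j\<le>n. \<alpha> j * c (m + int j)) = 0"
   and win: "\<forall>k<n. c (int k) = (if Suc k = n then 1 else 0)"
   and J: "J \<subset> {0..n}" and ann: "\<And>m. (\<Sum>j\<in>J. d j * of_real (c (m + int j))) = 0"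
  shows "\<forall>j\<in>J. d j = 0"
proof -
  define q where "q j = (if j \<in> J then d j else 0)" for j
  have qa: "(\<Sum>j\<le>n. q j * of_real (c (m + int j))) = 0" for m
  proof -
    have "(\<Sum>j\<le>n. q j * of_real (c (m + int j))) = (\<Sum>j\<in>J. q j * of_real (c (m + int j)))"
      by (rule sum.mono_neutral_right) (use J in \<open>auto simp: q_def\<close>)
    also have "\<dots> = (\<Sum>j\<in>J. d j * of_real (c (m + int j)))" by (simp add: q_def)
    finally show ?thesis using ann by simp
  qed
  define l where "l = q n / of_real (\<alpha> n)"
  define r where "r j = q j - l * of_real (\<alpha> j)" for j
  have rn: "r n = 0" using nz by (simp add: r_def l_def)
  have ra: "(\<Sum>j<n. r j * of_real (c (m + int j))) = 0" for m
  proof -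
    have "(\<Sum>j\<le>n. r j * of_real (c (m + int j))) = (\<Sum>j\<le>n. q j * of_real (c (m + int j))) - l * of_real (\<Sum>j\<le>n. \<alpha> j * c (m + int j))"
      by (simp add: r_def algebra_simps sum_subtractf sum_distrib_left)
    also have "\<dots> = 0" using qa rec by simp
    finally show ?thesis using rn by (simp add: lessThan_Suc_atMost[symmetric])
  qed
  have r0: "\<forall>j<n. r j = 0"
  proof (rule ccontr)
    assume "\<not> ?thesis"
    then have ne: "{j. j < n \<and> r j \<noteq> 0} \<noteq> {}" by auto
    define js where "js = Max {j. j < n \<and> r j \<noteq> 0}"
    have fin: "finite {j. j < n \<and> r j \<noteq> 0}" by auto
    have js: "js < n" "r js \<noteq> 0" using Max_in[OF fin ne] unfolding js_def by auto
    have big: "r j = 0" if "j < n" "j > js" for j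
    proof (rule ccontr)
      assume "r j \<noteq> 0"
      then have "j \<le> js" using Max_ge[OF fin, of j] that unfolding js_def by auto
      then show False using that by simp
    qed
    define m where "m = int (n - 1 - js)"
    have "(\<Sum>j<n. r j * of_real (c (m + int j))) = (\<Sum>j\<in>{js}. r j * of_real (c (m + int j)))"
    proof (rule sum.mono_neutral_right)
      show "finite {..<n}" by simp
      show "{js} \<subseteq> {..<n}" using js by simp
      show "\<forall>j\<in>{..<n} - {js}. r j * of_real (c (m + int j)) = 0"
      proof
        fix j assume j: "j \<in> {..<n} - {js}"
        show "r j * of_real (c (m + int j)) = 0"
        proof (cases "j > js")
          case True then show ?thesis using big j by simp
        next
          case False
          then have jj: "j < js" using j by auto
          have k: "n - 1 - js + j < n" "Suc (n - 1 - js + j) \<noteq> n" using js jj by auto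
          have "c (m + int j) = c (int (n - 1 - js + j))" by (simp add: m_def)
          also have "\<dots> = 0" using win[rule_format, OF k(1)] k(2) by (simp del: of_nat_add)
          finally show ?thesis by simp
        qed
      qed
    qed
    also have "\<dots> = r js"
    proof -
      have k: "n - 1 < n" "Suc (n - 1) = n" using js by auto
      have "c (m + int js) = c (int (n - 1))" using js by (simp add: m_def)
      also have "\<dots> = 1" using win[rule_format, OF k(1)] k(2) by (simp del: of_nat_add)
      finally show ?thesis by simp
    qed
    finally show False using ra js by simp
  qed
  have ql: "q j = l * of_real (\<alpha> j)" if "j \<le> n" for j
  proof (cases "j < n")
    case True then show ?thesis using r0 by (auto simp: r_def)
  next
    case False then have "j = n" using that by simp
    then show ?thesis using nz by (simp add: l_def)
  qed
  obtain j0 where "j0 \<in> {0..n} - J" using J psubset_imp_ex_mem by blast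
  then have j0: "j0 \<le> n" "j0 \<notin> J" by auto
  then have "l = 0" using ql[of j0] nz by (simp add: q_def)
  then show ?thesis using ql J by (force simp: q_def)
qed



lemma exp_int_abs: "exp (lam * \<bar>real_of_int k\<bar>) = exp lam ^ nat \<bar>k\<bar>"
  using exp_nat_abs[of lam k] by simp

lemma dominance:
  fixes g :: "int \<Rightarrow> complex" and lam K G :: real
  assumes K: "K \<ge> 1" and lam: "lam > 0" and E: "exp lam \<ge> 400 * K^2"
    and gb: "\<And>m. norm (g m) \<le> G * K ^ nat \<bar>m\<bar>"
    and hs: "\<And>m0. ((\<lambda>m. g m * of_real (tanh (lam * (of_int (m - m0) + 1/2)) - tanh (lam * (of_int (m - m0) - 1/2)))) has_sum 0) UNIV"
  shows "g m1 = 0"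
proof (rule ccontr)
  assume g1: "g m1 \<noteq> 0"
  define L where "L = 2 * K"
  define E where "E = exp lam"
  define D where "D l = tanh (lam * (of_int l + 1/2)) - tanh (lam * (of_int l - 1/2))" for l :: int
  have L1: "L \<ge> 2" using K by (simp add: L_def)
  have Epos: "E > 0" by (simp add: E_def)
  have E400: "E \<ge> 400"
  proof -
    have "1 \<le> K^2" using K by (simp add: one_le_power)
    then show ?thesis using E unfolding E_def by linarith
  qed
  have D0: "D 0 \<ge> 1"
  proof -
    define e where "e = exp (-lam)"
    have e: "e > 0" "e \<le> 1/3"
    proof -
      show "e > 0" by (simp add: e_def)
      have "e = 1 / E" by (simp add: e_def E_def exp_minus field_simps)
      then show "e \<le> 1/3" using E400 by (simp add: divide_le_eq)
    qed
    have "D 0 = 2 * tanh (lam / 2)" by (simp add: D_def)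
    also have "tanh (lam / 2) = (1 - e) / (1 + e)" by (simp add: tanh_real_altdef e_def)
    finally have "D 0 = 2 * ((1 - e) / (1 + e))" .
    moreover have "2 * ((1 - e) / (1 + e)) \<ge> 1" using e by (simp add: field_simps)
    ultimately show ?thesis by simp
  qed
  have Dnn: "D l \<ge> 0" for l
  proof -
    have "lam * (of_int l - 1/2) \<le> lam * (of_int l + 1/2)" using lam by (intro mult_left_mono) auto
    then show ?thesis by (simp add: D_def)
  qed
  have Db: "D l \<le> 2 / E ^ nat \<bar>l\<bar>" if l0: "l \<noteq> 0" for l
  proof (cases "l > 0")
    case True
    have "D l \<le> 1 - tanh (lam * (of_int l - 1/2))"
      using tanh_real_lt_1[of "lam * (of_int l + 1/2)"] by (simp add: D_def)
    also have "\<dots> \<le> 2 * exp (-2 * (lam * (of_int l - 1/2)))" by (rule tanh_1m)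
    also have "\<dots> \<le> 2 * exp (- (lam * real (nat \<bar>l\<bar>)))"
    proof -
      have "lam * 1 \<le> lam * of_int l" using True lam by (intro mult_left_mono) auto
      then show ?thesis using True by (simp add: algebra_simps)
    qed
    also have "\<dots> = 2 / E ^ nat \<bar>l\<bar>" by (simp add: exp_minus exp_nat_abs exp_int_abs E_def field_simps)
    finally show ?thesis .
  next
    case False
    then have ln: "l < 0" using l0 by simp
    have "D l \<le> 1 + tanh (lam * (of_int l + 1/2))"
      using tanh_real_gt_neg1[of "lam * (of_int l - 1/2)"] by (simp add: D_def)
    also have "\<dots> \<le> 2 * exp (2 * (lam * (of_int l + 1/2)))" by (rule tanh_1p)
    also have "\<dots> \<le> 2 * exp (- (lam * real (nat \<bar>l\<bar>)))"
    proof -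
      have "lam * of_int l \<le> lam * (-1)" using ln lam by (intro mult_left_mono) auto
      then show ?thesis using ln by (simp add: algebra_simps)
    qed
    also have "\<dots> = 2 / E ^ nat \<bar>l\<bar>" by (simp add: exp_minus exp_nat_abs exp_int_abs E_def field_simps)
    finally show ?thesis .
  qed
  define f where "f m = norm (g m) / L ^ nat \<bar>m\<bar>" for m
  define s where "s = f m1"
  have s: "s > 0" using g1 L1 by (simp add: s_def f_def)
  have G: "G > 0"
  proof -
    have "0 < norm (g m1)" using g1 by simp
    also have "\<dots> \<le> G * K ^ nat \<bar>m1\<bar>" by (rule gb)
    finally show ?thesis using K by (simp add: zero_less_mult_iff)
  qed
  have fb: "f m \<le> G * (1/2) ^ nat \<bar>m\<bar>" for m
  proof -
    have "f m \<le> G * K ^ nat \<bar>m\<bar> / L ^ nat \<bar>m\<bar>" unfolding f_def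
      using gb[of m] L1 by (intro divide_right_mono) auto
    also have "\<dots> = G * (1/2) ^ nat \<bar>m\<bar>" using K by (simp add: L_def power_mult_distrib power_divide)
    finally show ?thesis .
  qed
  obtain N where N: "(1/2::real) ^ N < s / G" using real_arch_pow_inv[of "s/G" "1/2"] s G by auto
  define S where "S = {m. f m \<ge> s}"
  have Ssub: "S \<subseteq> {-int N..int N}"
  proof
    fix m assume m: "m \<in> S"
    have "nat \<bar>m\<bar> \<le> N"
    proof (rule ccontr)
      assume "\<not> nat \<bar>m\<bar> \<le> N"
      then have "(1/2::real) ^ nat \<bar>m\<bar> \<le> (1/2) ^ N" by (intro power_decreasing) auto
      then have "f m < s" using fb[of m] N G by (smt (verit) mult_left_mono pos_less_divide_eq mult.commute)
      then show False using m by (simp add: S_def)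
    qed
    then show "m \<in> {-int N..int N}" by auto
  qed
  have finS: "finite S" using Ssub finite_subset by blast
  have m1S: "m1 \<in> S" by (simp add: S_def s_def)
  obtain ms where ms: "ms \<in> S" "f ms = Max (f ` S)"
  proof -
    have "Max (f ` S) \<in> f ` S" using finS m1S by (intro Max_in) auto
    then show ?thesis using that by (metis imageE)
  qed
  have fmax: "f m \<le> f ms" for m
  proof (cases "m \<in> S")
    case True then show ?thesis using ms finS by simp
  next
    case False then have "f m < s" by (simp add: S_def)
    also have "s \<le> f ms" using ms(1) by (simp add: S_def)
    finally show ?thesis by simp
  qed
  have gms: "norm (g ms) > 0"
  proof -
    have "0 < f ms" using ms(1) s by (simp add: S_def)
    then show ?thesis by (simp add: f_def zero_less_divide_iff)
  qed
  have gk: "norm (g k) \<le> norm (g ms) * L ^ nat \<bar>k - ms\<bar>" for k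
  proof -
    have Lp: "L ^ nat \<bar>ms\<bar> > 0" "L ^ nat \<bar>k\<bar> > 0" using L1 by auto
    have "norm (g k) = f k * L ^ nat \<bar>k\<bar>" using Lp L1 by (simp add: f_def)
    also have "\<dots> \<le> f ms * L ^ nat \<bar>k\<bar>" using fmax[of k] Lp by (intro mult_right_mono) auto
    also have "\<dots> \<le> f ms * (L ^ nat \<bar>k - ms\<bar> * L ^ nat \<bar>ms\<bar>)"
    proof -
      have "L ^ nat \<bar>k\<bar> \<le> L ^ (nat \<bar>k - ms\<bar> + nat \<bar>ms\<bar>)" using L1 by (intro power_increasing) auto
      then have "L ^ nat \<bar>k\<bar> \<le> L ^ nat \<bar>k - ms\<bar> * L ^ nat \<bar>ms\<bar>" by (simp only: power_add)
      moreover have "f ms \<ge> 0" using L1 by (simp add: f_def)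
      ultimately show ?thesis by (rule mult_left_mono)
    qed
    also have "\<dots> = norm (g ms) * L ^ nat \<bar>k - ms\<bar>" using Lp L1 by (simp add: f_def)
    finally show ?thesis .
  qed
  define \<rho> where "\<rho> = L / E"
  have \<rho>: "0 \<le> \<rho>" "\<rho> \<le> 1/200"
  proof -
    show "0 \<le> \<rho>" using L1 Epos by (simp add: \<rho>_def)
    have "400 * K^2 \<ge> 200 * L" using K by (simp add: L_def power2_eq_square)
    then have "L \<le> E / 200" using E unfolding E_def by simp
    then show "\<rho> \<le> 1/200" using Epos by (simp add: \<rho>_def divide_le_eq)
  qed
  have H: "((\<lambda>m. g m * of_real (D (m - ms))) has_sum 0) UNIV" using hs[of ms] by (simp add: D_def)
  have H2: "((\<lambda>m. g m * of_real (D (m - ms))) has_sum (0 - g ms * of_real (D 0))) (UNIV - {ms})"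
    by (rule has_sum_Diff[OF H]) (auto simp: has_sum_finite_iff)
  have Hb: "((\<lambda>m. norm (g ms) * 2 * \<rho> ^ nat \<bar>m - ms\<bar>) has_sum (norm (g ms) * 2 * (2 * \<rho> / (1 - \<rho>)))) (UNIV - {ms})"
    by (rule has_sum_cmult_right[OF geom_int_shift]) (use \<rho> in auto)
  have "norm (0 - g ms * of_real (D 0)) \<le> norm (g ms) * 2 * (2 * \<rho> / (1 - \<rho>))"
  proof (rule norm_infsum_le[OF H2 Hb])
    fix m assume "m \<in> UNIV - {ms}"
    then have l: "m - ms \<noteq> 0" by auto
    have "norm (g m * of_real (D (m - ms))) = norm (g m) * D (m - ms)" using Dnn[of "m - ms"] by (simp add: norm_mult)
    also have "\<dots> \<le> (norm (g ms) * L ^ nat \<bar>m - ms\<bar>) * (2 / E ^ nat \<bar>m - ms\<bar>)"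
      using gk[of m] Db[OF l] Dnn[of "m - ms"] L1 by (intro mult_mono) auto
    also have "\<dots> = norm (g ms) * 2 * \<rho> ^ nat \<bar>m - ms\<bar>" by (simp add: \<rho>_def power_divide)
    finally show "norm (g m * of_real (D (m - ms))) \<le> norm (g ms) * 2 * \<rho> ^ nat \<bar>m - ms\<bar>" .
  qed
  then have A: "norm (g ms) * D 0 \<le> norm (g ms) * (2 * (2 * \<rho> / (1 - \<rho>)))"
    using Dnn[of 0] by (simp add: norm_mult mult_ac)
  have B: "2 * (2 * \<rho> / (1 - \<rho>)) < 1" using \<rho> by (simp add: field_simps)
  have "norm (g ms) * 1 \<le> norm (g ms) * D 0" using D0 gms by (intro mult_left_mono) auto
  also have "\<dots> \<le> norm (g ms) * (2 * (2 * \<rho> / (1 - \<rho>)))" by (rule A)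
  also have "\<dots> < norm (g ms) * 1" using B gms by (intro mult_strict_left_mono) auto
  finally show False by simp
qed



theorem proposition3:
  fixes \<alpha> :: "nat \<Rightarrow> real" and n :: nat
  assumes "n \<ge> 1"
    and "\<forall>k\<le>n. \<alpha> k \<noteq> 0"
  shows "\<exists>b>0. \<exists>\<zeta>::real. \<exists>\<sigma>. Sigma_class 1 b \<sigma> \<and>
           affine_symmetry \<sigma> \<zeta> {0..n} \<alpha> (\<lambda>_. 1) (\<lambda>k. real k)"
proof -
  obtain c K B where K: "K \<ge> 1" and B: "B \<ge> 0" and cb: "\<forall>m. \<bar>c m\<bar> \<le> B * K ^ nat \<bar>m\<bar>"
    and rec: "\<forall>m. (\<Sum>j\<le>n. \<alpha> j * c (m + int j)) = 0"
    and win: "\<forall>k<n. c (int k) = (if Suc k = n then 1 else 0)"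
  proof -
    from seq_exists[OF assms] obtain c K B where P: "K \<ge> 1 \<and> B \<ge> 0 \<and> (\<forall>m. \<bar>c m\<bar> \<le> B * K ^ nat \<bar>m\<bar>) \<and>
     (\<forall>m. (\<Sum>j\<le>n. \<alpha> j * c (m + int j)) = 0) \<and>
     (\<forall>k<n. c (int k) = (if Suc k = n then 1 else 0))" by (elim exE) (rule that)
    then show ?thesis using that by (elim conjE) (rule that)
  qed
  define E where "E = 400 * K^2"
  define lam where "lam = ln E"
  define b where "b = pi / lam"
  have K2: "K^2 \<ge> 1" using K by (simp add: one_le_power)
  have E400: "E \<ge> 400" using K2 by (simp add: E_def)
  have lam: "lam > 0" using E400 by (simp add: lam_def)
  have expl: "exp lam = E" using E400 by (simp add: lam_def)
  have b: "b > 0" using lam by (simp add: b_def)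
  have pib: "pi / b = lam" using lam by (simp add: b_def)
  have KE: "K < exp lam ^ 2"
  proof -
    have "K \<le> K^2" using K by (simp add: power2_eq_square)
    also have "\<dots> < E" using K2 unfolding E_def by linarith
    also have "E \<le> E^2" using E400 by (simp add: power2_eq_square)
    finally show ?thesis by (simp add: expl)
  qed
  have KE2: "exp lam \<ge> 400 * K^2" by (simp add: expl E_def)
  have summ: "\<And>x. (\<lambda>k. c k * (of_int (sgn k) + tanh (lam * (x - of_int k)))) summable_on UNIV"
    by (rule T_summable[OF lam K B _ KE]) (use cb in auto)
  define S where "S x = infsum (\<lambda>k. c k * (of_int (sgn k) + tanh (lam * (x - of_int k)))) UNIV" for x
  define \<sigma> where "\<sigma> z = infsum (\<lambda>k. complex_of_real (c k) * (of_int (sgn k) + tanh (of_real (pi / b) * (z - of_int k * of_real 1)))) (UNIV::int set)" for z :: complex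
  have \<sigma>r: "\<sigma> (of_real x) = of_real (S x)" for x
  proof -
    have eq: "(\<lambda>k. complex_of_real (c k) * (of_int (sgn k) + tanh (of_real (pi / b) * (of_real x - of_int k * of_real 1))))
        = (\<lambda>k. of_real (c k * (of_int (sgn k) + tanh (lam * (x - of_int k)))))"
    proof (rule ext)
      fix k :: int
      have "tanh (of_real (pi / b) * (of_real x - of_int k * of_real 1)) = complex_of_real (tanh (lam * (x - of_int k)))"
      proof -
        have "of_real (pi / b) * (of_real x - of_int k * of_real 1) = complex_of_real (lam * (x - of_int k))"
          by (simp add: pib)
        then show ?thesis by (simp only: tanh_of_real_c)
      qed
      then show "complex_of_real (c k) * (of_int (sgn k) + tanh (of_real (pi / b) * (of_real x - of_int k * of_real 1)))
        = of_real (c k * (of_int (sgn k) + tanh (lam * (x - of_int k))))"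
        by simp
    qed
    have "((\<lambda>k. complex_of_real (c k * (of_int (sgn k) + tanh (lam * (x - of_int k))))) has_sum of_real (S x)) UNIV"
      unfolding S_def by (intro has_sum_of_real) (use summ[of x] in \<open>simp add: summable_iff_has_sum_infsum\<close>)
    then show ?thesis unfolding \<sigma>_def eq by (rule infsumI)
  qed
  have \<sigma>rs: "\<sigma> (of_real (1 * t + real j)) = of_real (infsum (\<lambda>k. c k * (of_int (sgn k) + tanh (lam * ((t + real j) - of_int k)))) UNIV)" for t j
    using \<sigma>r[of "t + real j"] by (simp add: S_def)
  have SC: "Sigma_class 1 b \<sigma>"
  proof -
    have G2: "\<exists>k. complex_of_real (c k) \<noteq> 0"
    proof (intro exI[of _ "int (n - 1)"])
      have k: "n - 1 < n" "Suc (n - 1) = n" using assms(1) by auto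
      have "c (int (n - 1)) = 1" using win[rule_format, OF k(1)] k(2) by (simp del: of_nat_diff)
      then show "complex_of_real (c (int (n - 1))) \<noteq> 0" by simp
    qed
    have G3: "\<sigma> z = 0 + (\<Sum>\<^sub>\<infinity>k. complex_of_real (c k) * (of_int (sgn k) + tanh (complex_of_real (pi / b) * (z - of_int k * complex_of_real 1))))" for z
      by (simp only: \<sigma>_def add_0_left)
    define Q where "Q = exp (lam / 2)"
    have Q: "Q \<ge> K"
    proof -
      have "Q^2 = exp lam" using exp_double[of "lam/2"] by (simp add: Q_def)
      then have "K^2 \<le> Q^2" using KE2 K2 by linarith
      then show ?thesis by (rule power2_le_imp_le) (simp add: Q_def)
    qed
    have M: "norm (complex_of_real (c k)) * exp (- pi * (1/2) * \<bar>real_of_int k\<bar> / b) \<le> B" for k :: int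
    proof -
      have y1: "- pi * (1/2) * \<bar>real_of_int k\<bar> / b = - ((pi / b) * \<bar>real_of_int k\<bar> / 2)"
        using b by (simp add: field_simps)
      have y2: "\<bar>real_of_int k\<bar> = real (nat \<bar>k\<bar>)" by simp
      have y3: "- ((pi / b) * \<bar>real_of_int k\<bar> / 2) = - (real (nat \<bar>k\<bar>) * (lam / 2))"
        unfolding pib y2 by simp
      have ex: "exp (- pi * (1/2) * \<bar>real_of_int k\<bar> / b) = inverse (Q ^ nat \<bar>k\<bar>)"
        unfolding y1 y3 exp_minus exp_of_nat_mult Q_def ..
      have Qp: "Q ^ nat \<bar>k\<bar> > 0" by (simp add: Q_def)
      have "norm (complex_of_real (c k)) * exp (- pi * (1/2) * \<bar>real_of_int k\<bar> / b) = \<bar>c k\<bar> / Q ^ nat \<bar>k\<bar>"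
        unfolding ex norm_of_real by (simp add: divide_inverse)
      also have "\<dots> \<le> B * K ^ nat \<bar>k\<bar> / Q ^ nat \<bar>k\<bar>" using cb Qp by (intro divide_right_mono) auto
      also have "\<dots> \<le> B * Q ^ nat \<bar>k\<bar> / Q ^ nat \<bar>k\<bar>"
        using Q K B Qp by (intro divide_right_mono mult_left_mono power_mono) auto
      also have "\<dots> = B" using Qp by (simp add: Q_def)
      finally show ?thesis .
    qed
    have M2: "\<exists>M. \<forall>k. norm (complex_of_real (c k)) * exp (- pi * (1/2) * \<bar>real_of_int k\<bar> / b) \<le> M"
      using M by blast
    have G1: "\<exists>a'>0. a' < 1 \<and> (\<exists>M. \<forall>k. norm (complex_of_real (c k)) * exp (- pi * a' * \<bar>real_of_int k\<bar> / b) \<le> M)"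
      by (rule exI[of _ "1/2"]) (use M2 in simp)
    show ?thesis unfolding Sigma_class_def
      by (rule exI[of _ 0], rule exI[of _ "\<lambda>k. complex_of_real (c k)"], intro conjI allI, fact G1, fact G2, rule G3)
  qed
  define \<zeta> where "\<zeta> = (\<Sum>m\<in>{-int n..0}. \<Sum>j\<in>{0..n}. \<alpha> j * c (m + int j) * of_int (sgn (m + int j) - sgn m))"
  have EQ: "(\<Sum>s\<in>{0..n}. of_real (\<alpha> s) * \<sigma> (of_real (1 * t + real s))) = of_real \<zeta>" for t
  proof -
    have D: "((\<lambda>m. (\<Sum>j\<in>{0..n}. complex_of_real (\<alpha> j) * of_real (c (m + int j))) * of_real (of_int (sgn m) + tanh (lam * (t - of_int m)))) has_sum
     ((\<Sum>j\<in>{0..n}. complex_of_real (\<alpha> j) * of_real (infsum (\<lambda>k. c k * (of_int (sgn k) + tanh (lam * ((t + real j) - of_int k)))) UNIV))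
      - (\<Sum>m\<in>{-int n..0}. \<Sum>j\<in>{0..n}. complex_of_real (\<alpha> j) * of_real (c (m + int j)) * of_real (of_int (sgn (m + int j) - sgn m))))) UNIV"
      by (rule decomp[OF summ]) auto
    have g0: "(\<Sum>j\<in>{0..n}. complex_of_real (\<alpha> j) * of_real (c (m + int j))) = 0" for m
    proof -
      have "(\<Sum>j\<in>{0..n}. complex_of_real (\<alpha> j) * of_real (c (m + int j))) = of_real (\<Sum>j\<le>n. \<alpha> j * c (m + int j))"
        by (simp add: atLeast0AtMost)
      then show ?thesis using rec by simp
    qed
    have H0: "((\<lambda>m::int. 0::complex) has_sum
     ((\<Sum>j\<in>{0..n}. complex_of_real (\<alpha> j) * of_real (infsum (\<lambda>k. c k * (of_int (sgn k) + tanh (lam * ((t + real j) - of_int k)))) UNIV))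
      - (\<Sum>m\<in>{-int n..0}. \<Sum>j\<in>{0..n}. complex_of_real (\<alpha> j) * of_real (c (m + int j)) * of_real (of_int (sgn (m + int j) - sgn m))))) UNIV"
      using D by (simp only: g0 mult_zero_left)
    have "(\<Sum>j\<in>{0..n}. complex_of_real (\<alpha> j) * of_real (infsum (\<lambda>k. c k * (of_int (sgn k) + tanh (lam * ((t + real j) - of_int k)))) UNIV))
      = (\<Sum>m\<in>{-int n..0}. \<Sum>j\<in>{0..n}. complex_of_real (\<alpha> j) * of_real (c (m + int j)) * of_real (of_int (sgn (m + int j) - sgn m)) :: complex)"
      using has_sum_unique[OF H0 has_sum_0_simp] by simp
    also have "\<dots> = of_real \<zeta>" by (simp add: \<zeta>_def)
    finally show ?thesis by (simp only: \<sigma>rs)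
  qed
  have MIN: "\<not> (\<exists>J. J \<subset> {0..n} \<and> lin_dep_with_one \<sigma> J (\<lambda>_. 1) (\<lambda>k. real k))"
  proof
    assume "\<exists>J. J \<subset> {0..n} \<and> lin_dep_with_one \<sigma> J (\<lambda>_. 1) (\<lambda>k. real k)"
    then obtain J e d where J: "J \<subset> {0..n}" and nt: "e \<noteq> 0 \<or> (\<exists>s\<in>J. d s \<noteq> 0)"
      and rel: "\<And>t. e + (\<Sum>s\<in>J. d s * \<sigma> (of_real (1 * t + real s))) = 0"
      unfolding lin_dep_with_one_def by blast
    have Jf: "finite J" using J finite_subset by auto
    have Jn: "J \<subseteq> {..n}" using J by auto
    define g where "g m = (\<Sum>j\<in>J. d j * of_real (c (m + int j)))" for m
    define U where "U = (\<Sum>m\<in>{-int n..0}. \<Sum>j\<in>J. d j * of_real (c (m + int j)) * of_real (of_int (sgn (m + int j) - sgn m)) :: complex)"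
    have Phi: "((\<lambda>m. g m * of_real (of_int (sgn m) + tanh (lam * (t - of_int m)))) has_sum (- e - U)) UNIV" for t
    proof -
      have "((\<lambda>m. g m * of_real (of_int (sgn m) + tanh (lam * (t - of_int m)))) has_sum
        ((\<Sum>j\<in>J. d j * of_real (infsum (\<lambda>k. c k * (of_int (sgn k) + tanh (lam * ((t + real j) - of_int k)))) UNIV)) - U)) UNIV"
        unfolding g_def U_def by (rule decomp[OF summ Jf Jn])
      moreover have "(\<Sum>j\<in>J. d j * of_real (infsum (\<lambda>k. c k * (of_int (sgn k) + tanh (lam * ((t + real j) - of_int k)))) UNIV)) = - e"
        using rel[of t] unfolding \<sigma>rs add_eq_0_iff by assumption
      ultimately show ?thesis by simp
    qed
    show False
    proof (cases "\<forall>m. g m = 0")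
      case True
      have "\<forall>j\<in>J. d j = 0"
        by (rule annih[OF assms(1) assms(2) rec win J]) (use True in \<open>simp add: g_def\<close>)
      moreover have "e = 0" using rel[of 0] calculation by simp
      ultimately show False using nt by auto
    next
      case False
      then obtain m1 where m1: "g m1 \<noteq> 0" by auto
      define G where "G = (\<Sum>j\<in>J. norm (d j)) * B * K ^ n"
      have gb: "norm (g m) \<le> G * K ^ nat \<bar>m\<bar>" for m
      proof -
        have "norm (g m) \<le> (\<Sum>j\<in>J. norm (d j) * \<bar>c (m + int j)\<bar>)"
          unfolding g_def by (rule order.trans[OF norm_sum]) (simp add: norm_mult)
        also have "\<dots> \<le> (\<Sum>j\<in>J. norm (d j) * (B * K ^ n * K ^ nat \<bar>m\<bar>))"
        proof (rule sum_mono)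
          fix j assume j: "j \<in> J"
          have "K ^ nat \<bar>m + int j\<bar> \<le> K ^ (n + nat \<bar>m\<bar>)"
            using K j Jn by (intro power_increasing) auto
          have "\<bar>c (m + int j)\<bar> \<le> B * K ^ nat \<bar>m + int j\<bar>" using cb by blast
          also have "\<dots> \<le> B * K ^ (n + nat \<bar>m\<bar>)" using \<open>K ^ nat \<bar>m + int j\<bar> \<le> K ^ (n + nat \<bar>m\<bar>)\<close> B
            by (rule mult_left_mono)
          also have "\<dots> = B * K ^ n * K ^ nat \<bar>m\<bar>" by (simp add: power_add mult_ac)
          finally have "\<bar>c (m + int j)\<bar> \<le> B * K ^ n * K ^ nat \<bar>m\<bar>" .
          then show "norm (d j) * \<bar>c (m + int j)\<bar> \<le> norm (d j) * (B * K ^ n * K ^ nat \<bar>m\<bar>)"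
            by (intro mult_left_mono) auto
        qed
        also have "\<dots> = G * K ^ nat \<bar>m\<bar>" unfolding G_def by (simp add: sum_distrib_left sum_distrib_right mult_ac)
        finally show ?thesis .
      qed
      have hs: "((\<lambda>m. g m * of_real (tanh (lam * (of_int (m - m0) + 1/2)) - tanh (lam * (of_int (m - m0) - 1/2)))) has_sum 0) UNIV" for m0
      proof -
        define x where "x = real_of_int m0 + 1/2"
        define y where "y = real_of_int m0 - 1/2"
        have h: "((\<lambda>m. g m * of_real (of_int (sgn m) + tanh (lam * (x - of_int m))) - g m * of_real (of_int (sgn m) + tanh (lam * (y - of_int m)))) has_sum ((- e - U) - (- e - U))) UNIV"
          by (rule has_sum_diff'[OF Phi Phi])
        have ex: "lam * (x - of_int m) = - (lam * (of_int (m - m0) - 1/2))" for m by (simp add: x_def algebra_simps)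
        have ey: "lam * (y - of_int m) = - (lam * (of_int (m - m0) + 1/2))" for m by (simp add: y_def algebra_simps)
        have "(\<lambda>m. g m * of_real (of_int (sgn m) + tanh (lam * (x - of_int m))) - g m * of_real (of_int (sgn m) + tanh (lam * (y - of_int m))))
          = (\<lambda>m. g m * of_real (tanh (lam * (of_int (m - m0) + 1/2)) - tanh (lam * (of_int (m - m0) - 1/2))))"
          unfolding ex ey tanh_minus by (rule ext) (simp add: algebra_simps)
        then show ?thesis using h by simp
      qed
      have "g m1 = 0" by (rule dominance[OF K lam KE2 gb hs])
      then show False using m1 by simp
    qed
  qed
  have AS: "affine_symmetry \<sigma> \<zeta> {0..n} \<alpha> (\<lambda>_. 1) (\<lambda>k. real k)"
    unfolding affine_symmetry_def
  proof (intro conjI allI)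
    show "finite {0..n}" by simp
    show "{0..n} \<noteq> {}" by simp
    fix t :: real
    show "(\<Sum>s\<in>{0..n}. of_real (\<alpha> s) * \<sigma> (of_real (1 * t + real s))) = of_real \<zeta>" by (rule EQ)
  next
    show "\<not> (\<exists>J. J \<subset> {0..n} \<and> lin_dep_with_one \<sigma> J (\<lambda>_. 1) (\<lambda>k. real k))" by (rule MIN)
  qed
  show ?thesis using b SC AS by blast
qed



end
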